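(* Let $p$ be an obstacle and $(p_n)$ an approximating sequence as in the context. Let ${\boldsymbol v}\in C([0,T];{\boldsymbol W}_\sigma(\Omega))$ satisfy $|{\boldsymbol v}|\le p$ on $Q$ and $\operatorname{supp}({\boldsymbol v})\subset\{(x,t)\in\Omega\times[0,T]: p(x,t)\ge\delta\}$ for some $\delta>0$. Put $M=\delta+\sup_{(x,t)\in Q}|{\boldsymbol v}(x,t)|$ and $$\delta_n=\frac1\delta\max_{\operatorname{supp}({\boldsymbol v})}|\min\{p,M\}-\min\{p_n,M\}|,\quad n\in\mathbb N.$$ Then $\delta_n\to0$ as $n\to\infty$, and for every $n$, $(1-\delta_n)^+{\boldsymbol v}(t)\in K(p_n;t)$ for all $t\in[0,T]$.
   Context: $\Omega\subset\mathbb R^3$ is a bounded domain with smooth boundary, $0<T<\infty$, $Q=\Omega\times(0,T)$, $\overline Q$ its closure. ${\boldsymbol W}_\sigma(\Omega)$, ${\boldsymbol V}_\sigma(\Omega)$ are the closures of the smooth compactly supported divergence-free fields $\Omega\to\mathbb R^3$ in $W^{1,4}_0(\Omega)^3$ and $H^1_0(\Omega)^3$. $\operatorname{supp}$ denotes the closure of the set where a function is nonzero. Obstacle: $p:\overline Q\to[0,\infty]$ continuous as a map into the extended half-line $[0,\infty]$ (equivalently $p/(1+p)$, set to $1$ where $p=\infty$, is continuous). Approximating sequence: $p_n:\overline Q\to(0,\infty)$ Lipschitz, such that (a) for every $\kappa\in(0,\infty)$, $p_n\to p$ uniformly on $\{(x,t)\in\overline Q: p(x,t)\le\kappa\}$;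 (b) for every sufficiently large $M>0$ there is $n_M$ with $M\le p_n\le p$ on $\{(x,t)\in\overline Q:p(x,t)>M\}$ for all $n\ge n_M$. $K(p_n;t)=\{{\boldsymbol z}\in{\boldsymbol V}_\sigma(\Omega): |{\boldsymbol z}(x)|\le p_n(x,t)\text{ a.e.}\}$. $a^+=\max\{a,0\}$. *)

theory Defs
  imports "HOL-Analysis.Analysis"
begin

type_synonym R3 = "real ^ 3"

definition pd :: "3 \<Rightarrow> (R3 \<Rightarrow> real) \<Rightarrow> (R3 \<Rightarrow> real)" where
  "pd i f x = frechet_derivative f (at x) (axis i 1)"

definition C_infty :: "(R3 \<Rightarrow> real) \<Rightarrow> bool" where
  "C_infty f \<longleftrightarrow> (\<forall>is :: 3 list. \<forall>x. foldr pd is f differentiable (at x))"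

definition supp :: "('a::topological_space \<Rightarrow> 'b::zero) \<Rightarrow> 'a set" where
  "supp f = closure {x. f x \<noteq> 0}"

definition smooth_bounded_domain :: "R3 set \<Rightarrow> bool" where
  "smooth_bounded_domain \<Omega> \<longleftrightarrow> open \<Omega> \<and> connected \<Omega> \<and> \<Omega> \<noteq> {} \<and> bounded \<Omega> \<and>
     (\<exists>\<phi>. C_infty \<phi> \<and> \<Omega> = {x. \<phi> x < 0} \<and> (\<forall>x. \<phi> x = 0 \<longrightarrow> (\<exists>i. pd i \<phi> x \<noteq> 0)))"

definition test_fun :: "R3 set \<Rightarrow> (R3 \<Rightarrow> real) \<Rightarrow> bool" where
  "test_fun \<Omega> \<psi> \<longleftrightarrow> C_infty \<psi> \<and> compact (supp \<psi>) \<and> supp \<psi> \<subseteq> \<Omega>"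

definition grad :: "(R3 \<Rightarrow> R3) \<Rightarrow> R3 \<Rightarrow> real^3^3" where
  "grad u x = (\<chi> i j. pd j (\<lambda>y. u y $ i) x)"

definition test_div_free :: "R3 set \<Rightarrow> (R3 \<Rightarrow> R3) \<Rightarrow> bool" where
  "test_div_free \<Omega> \<phi> \<longleftrightarrow> (\<forall>i. C_infty (\<lambda>x. \<phi> x $ i)) \<and> compact (supp \<phi>) \<and> supp \<phi> \<subseteq> \<Omega> \<and>
     (\<forall>x. (\<Sum>i\<in>UNIV. pd i (\<lambda>y. \<phi> y $ i) x) = 0)"

text \<open>Closure of the divergence-free test fields in W^{1,q}_0(Omega)^3 (as a set of functions,
  i.e. representatives): f is the W^{1,q}-limit of such test fields, G being the limit of the gradients.\<close>
definition sob_closure :: "real \<Rightarrow> R3 set \<Rightarrow> (R3 \<Rightarrow> R3) set" where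
  "sob_closure q \<Omega> = {f. f \<in> borel_measurable (lebesgue_on \<Omega>) \<and>
     (\<exists>\<phi> G. (\<forall>k. test_div_free \<Omega> (\<phi> k)) \<and> G \<in> borel_measurable (lebesgue_on \<Omega>) \<and>
        (\<lambda>k. \<integral>\<^sup>+x. ennreal (norm (\<phi> k x - f x) powr q) \<partial>lebesgue_on \<Omega>) \<longlonglongrightarrow> 0 \<and>
        (\<lambda>k. \<integral>\<^sup>+x. ennreal (norm (grad (\<phi> k) x - G x) powr q) \<partial>lebesgue_on \<Omega>) \<longlonglongrightarrow> 0)}"

definition W_sigma :: "R3 set \<Rightarrow> (R3 \<Rightarrow> R3) set" where
  "W_sigma \<Omega> = sob_closure 4 \<Omega>"

definition V_sigma :: "R3 set \<Rightarrow> (R3 \<Rightarrow> R3) set" where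
  "V_sigma \<Omega> = sob_closure 2 \<Omega>"

definition weak_grad :: "R3 set \<Rightarrow> (R3 \<Rightarrow> R3) \<Rightarrow> (R3 \<Rightarrow> real^3^3) \<Rightarrow> bool" where
  "weak_grad \<Omega> f G \<longleftrightarrow> G \<in> borel_measurable (lebesgue_on \<Omega>) \<and>
     (\<forall>\<psi>. test_fun \<Omega> \<psi> \<longrightarrow> (\<forall>i j.
        integral\<^sup>L (lebesgue_on \<Omega>) (\<lambda>x. f x $ i * pd j \<psi> x)
        = - integral\<^sup>L (lebesgue_on \<Omega>) (\<lambda>x. G x $ i $ j * \<psi> x)))"

text \<open>v in C([0,T]; W_sigma(Omega)), v given as a function of (x,t).\<close>
definition C_W_sigma :: "R3 set \<Rightarrow> real \<Rightarrow> (R3 \<times> real \<Rightarrow> R3) \<Rightarrow> bool" where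
  "C_W_sigma \<Omega> T v \<longleftrightarrow> (\<forall>t\<in>{0..T}. (\<lambda>x. v (x, t)) \<in> W_sigma \<Omega>) \<and>
     (\<exists>Dv. (\<forall>t\<in>{0..T}. weak_grad \<Omega> (\<lambda>x. v (x, t)) (Dv t)) \<and>
        (\<forall>t0\<in>{0..T}. ((\<lambda>t. \<integral>\<^sup>+x. ennreal (norm (v (x, t) - v (x, t0)) powr 4)
                                   + ennreal (norm (Dv t x - Dv t0 x) powr 4) \<partial>lebesgue_on \<Omega>)
                       \<longlongrightarrow> 0) (at t0 within {0..T})))"

definition K :: "R3 set \<Rightarrow> (R3 \<times> real \<Rightarrow> real) \<Rightarrow> real \<Rightarrow> (R3 \<Rightarrow> R3) set" where
  "K \<Omega> q t = {z \<in> V_sigma \<Omega>. AE x in lebesgue_on \<Omega>. norm (z x) \<le> q (x, t)}"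

definition obstacle :: "R3 set \<Rightarrow> real \<Rightarrow> (R3 \<times> real \<Rightarrow> ennreal) \<Rightarrow> bool" where
  "obstacle \<Omega> T p \<longleftrightarrow> continuous_on (closure \<Omega> \<times> {0..T}) p"

definition approx_seq :: "R3 set \<Rightarrow> real \<Rightarrow> (R3 \<times> real \<Rightarrow> ennreal) \<Rightarrow> (nat \<Rightarrow> R3 \<times> real \<Rightarrow> real) \<Rightarrow> bool" where
  "approx_seq \<Omega> T p pn \<longleftrightarrow>
     (\<forall>n. (\<forall>z\<in>closure \<Omega> \<times> {0..T}. pn n z > 0) \<and> (\<exists>L. L-lipschitz_on (closure \<Omega> \<times> {0..T}) (pn n))) \<and>
     (\<forall>\<kappa>>0. \<forall>\<epsilon>>0. \<exists>N. \<forall>n\<ge>N. \<forall>z\<in>closure \<Omega> \<times> {0..T}.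
         p z \<le> ennreal \<kappa> \<longrightarrow> \<bar>pn n z - enn2real (p z)\<bar> < \<epsilon>) \<and>
     (\<exists>M0>0. \<forall>M\<ge>M0. \<exists>nM. \<forall>n\<ge>nM. \<forall>z\<in>closure \<Omega> \<times> {0..T}.
         p z > ennreal M \<longrightarrow> M \<le> pn n z \<and> ennreal (pn n z) \<le> p z)"

end

theory Submission
  imports Defs
begin


lemma pd_scale:
  assumes "\<forall>x. h differentiable at x"
  shows "pd i (\<lambda>x. c * h x) = (\<lambda>x. c * pd i h x)"
proof
  fix x
  have "(h has_derivative frechet_derivative h (at x)) (at x)"
    using assms frechet_derivative_works by blast
  then have "((\<lambda>x. c * h x) has_derivative (\<lambda>y. c * frechet_derivative h (at x) y)) (at x)"
    by (rule has_derivative_mult_right)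
  then have "frechet_derivative (\<lambda>x. c * h x) (at x) = (\<lambda>y. c * frechet_derivative h (at x) y)"
    using frechet_derivative_at by metis
  then show "pd i (\<lambda>x. c * h x) x = c * pd i h x" by (simp add: pd_def)
qed

lemma foldr_scale:
  assumes "C_infty h"
  shows "foldr pd is (\<lambda>x. c * h x) = (\<lambda>x. c * foldr pd is h x)"
proof (induction "is")
  case Nil then show ?case by simp
next
  case (Cons i js)
  have "\<forall>x. foldr pd js h differentiable at x" using assms unfolding C_infty_def by blast
  then show ?case using Cons by (simp add: pd_scale)
qed

lemma C_infty_scale: "C_infty h \<Longrightarrow> C_infty (\<lambda>x. c * h x)"
  unfolding C_infty_def
  by (simp add: foldr_scale[unfolded C_infty_def] differentiable_mult)

lemma C_infty_cont: "C_infty h \<Longrightarrow> continuous_on UNIV h"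
proof -
  assume "C_infty h"
  then have "\<forall>x. foldr pd [] h differentiable at x" unfolding C_infty_def by blast
  then show ?thesis by (simp add: continuous_at_imp_continuous_on differentiable_imp_continuous_within)
qed

lemma C_infty_pd: "C_infty h \<Longrightarrow> continuous_on UNIV (pd j h)"
proof -
  assume "C_infty h"
  then have "\<forall>x. foldr pd [j] h differentiable at x" unfolding C_infty_def by blast
  then show ?thesis by (simp add: continuous_at_imp_continuous_on differentiable_imp_continuous_within)
qed

lemma supp_scale: "supp (\<lambda>x. c *\<^sub>R (f x :: real^3)) \<subseteq> supp f"
  unfolding supp_def by (intro closure_mono) auto

lemma tdf_scale:
  assumes "test_div_free \<Omega> \<phi>"
  shows "test_div_free \<Omega> (\<lambda>x. c *\<^sub>R \<phi> x)"
proof -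
  have C: "\<And>i. C_infty (\<lambda>x. \<phi> x $ i)" using assms unfolding test_div_free_def by blast
  have "compact (supp (\<lambda>x. c *\<^sub>R \<phi> x))"
  proof -
    have "compact (supp \<phi> \<inter> supp (\<lambda>x. c *\<^sub>R \<phi> x))"
      using assms unfolding test_div_free_def by (intro compact_Int_closed) (auto simp: supp_def)
    moreover have "supp \<phi> \<inter> supp (\<lambda>x. c *\<^sub>R \<phi> x) = supp (\<lambda>x. c *\<^sub>R \<phi> x)"
      using supp_scale[of c \<phi>] by blast
    ultimately show ?thesis by simp
  qed
  moreover have "supp (\<lambda>x. c *\<^sub>R \<phi> x) \<subseteq> \<Omega>"
    using assms supp_scale[of c \<phi>] unfolding test_div_free_def by blast
  moreover have "\<forall>x. (\<Sum>i\<in>UNIV. pd i (\<lambda>y. (c *\<^sub>R \<phi> y) $ i) x) = 0"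
  proof
    fix x
    have "(\<Sum>i\<in>UNIV. pd i (\<lambda>y. (c *\<^sub>R \<phi> y) $ i) x) = (\<Sum>i\<in>UNIV. c * pd i (\<lambda>y. \<phi> y $ i) x)"
      using foldr_scale[OF C, of "[_]" c] by simp
    also have "\<dots> = c * (\<Sum>i\<in>UNIV. pd i (\<lambda>y. \<phi> y $ i) x)" by (simp add: sum_distrib_left)
    also have "\<dots> = 0" using assms unfolding test_div_free_def by simp
    finally show "(\<Sum>i\<in>UNIV. pd i (\<lambda>y. (c *\<^sub>R \<phi> y) $ i) x) = 0" .
  qed
  ultimately show ?thesis unfolding test_div_free_def using C C_infty_scale by simp
qed

lemma grad_scale:
  assumes "test_div_free \<Omega> \<phi>"
  shows "grad (\<lambda>x. c *\<^sub>R \<phi> x) x = c *\<^sub>R grad \<phi> x"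
proof -
  have C: "\<And>i. C_infty (\<lambda>x. \<phi> x $ i)" using assms unfolding test_div_free_def by blast
  show ?thesis unfolding grad_def
    using foldr_scale[OF C, of "[_]" c] by (simp add: vec_eq_iff)
qed

lemma tdf_cont: "test_div_free \<Omega> \<phi> \<Longrightarrow> continuous_on UNIV \<phi>"
proof -
  assume a: "test_div_free \<Omega> \<phi>"
  have "continuous_on UNIV (\<lambda>x. \<chi> i. \<phi> x $ i)"
    using a unfolding test_div_free_def by (intro continuous_on_vec_lambda C_infty_cont) blast
  then show ?thesis by simp
qed

lemma grad_cont: "test_div_free \<Omega> \<phi> \<Longrightarrow> continuous_on UNIV (grad \<phi>)"
  unfolding test_div_free_def grad_def
  by (intro continuous_on_vec_lambda C_infty_pd) auto




lemma pw_ineq: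
  fixes a \<eta> :: real assumes "a \<ge> 0" "\<eta> > 0"
  shows "a powr 2 \<le> \<eta> + (1/\<eta>) * a powr 4"
proof (cases "a = 0")
  case True then show ?thesis using assms by simp
next
  case False
  then have a: "a > 0" using assms by simp
  have e1: "a powr 2 = a^2" using a by (simp add: powr_realpow)
  have e2: "a powr 4 = a^2 * a^2" using a by (simp add: powr_realpow flip: power_add)
  note e = e1 e2
  show ?thesis
  proof (cases "a^2 \<le> \<eta>")
    case True
    have h: "0 \<le> (1/\<eta>) * a powr 4" using assms by simp
    show ?thesis using True e1 h by linarith
  next
    case False
    then have "a^2 * 1 \<le> a^2 * (a^2/\<eta>)" using assms by (intro mult_left_mono) auto
    moreover have "(1/\<eta>) * a powr 4 = a^2*(a^2/\<eta>)" by (simp add: e2)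
    ultimately show ?thesis using e1 assms by linarith
  qed
qed

lemma L4_L2:
  fixes h :: "nat \<Rightarrow> 'a \<Rightarrow> real"
  assumes meas: "\<And>k. h k \<in> borel_measurable M" and fin: "emeasure M (space M) < \<infinity>"
    and nn: "\<And>k x. h k x \<ge> 0"
    and lim: "(\<lambda>k. \<integral>\<^sup>+x. ennreal (h k x powr 4) \<partial>M) \<longlonglongrightarrow> 0"
  shows "(\<lambda>k. \<integral>\<^sup>+x. ennreal (h k x powr 2) \<partial>M) \<longlonglongrightarrow> 0"
proof (rule tendsto_zero_ennreal)
  fix r :: real assume r: "0 < r"
  define m where "m = enn2real (emeasure M (space M))"
  have mm: "emeasure M (space M) = ennreal m" using fin by (simp add: m_def)
  have m0: "m \<ge> 0" by (simp add: m_def)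
  define \<eta> where "\<eta> = r / (2*(m+1))"
  have \<eta>: "\<eta> > 0" using r m0 by (simp add: \<eta>_def)
  have "0 < ennreal (\<eta>*r/3)" using \<eta> r by simp
  then have ev: "eventually (\<lambda>k. (\<integral>\<^sup>+x. ennreal (h k x powr 4) \<partial>M) < ennreal (\<eta>*r/3)) sequentially"
    using lim order_tendstoD(2) by blast
  then show "eventually (\<lambda>k. (\<integral>\<^sup>+x. ennreal (h k x powr 2) \<partial>M) < ennreal r) sequentially"
  proof eventually_elim
    fix k assume X: "(\<integral>\<^sup>+x. ennreal (h k x powr 4) \<partial>M) < ennreal (\<eta>*r/3)"
    have pw: "ennreal (h k x powr 2) \<le> ennreal \<eta> + ennreal (1/\<eta>) * ennreal (h k x powr 4)" for x
    proof -
      have "ennreal (h k x powr 2) \<le> ennreal (\<eta> + (1/\<eta>) * h k x powr 4)"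
        using pw_ineq[OF nn \<eta>] by (simp add: ennreal_leI)
      also have "\<dots> = ennreal \<eta> + ennreal ((1/\<eta>) * h k x powr 4)"
        using \<eta> by (intro ennreal_plus) auto
      also have "ennreal ((1/\<eta>) * h k x powr 4) = ennreal (1/\<eta>) * ennreal (h k x powr 4)"
        using \<eta> by (intro ennreal_mult) auto
      finally show ?thesis .
    qed
    have [measurable]: "h k \<in> borel_measurable M" by (rule meas)
    have "(\<integral>\<^sup>+x. ennreal (h k x powr 2) \<partial>M) \<le> (\<integral>\<^sup>+x. ennreal \<eta> + ennreal (1/\<eta>) * ennreal (h k x powr 4) \<partial>M)"
      using pw by (intro nn_integral_mono) auto
    also have "\<dots> = ennreal \<eta> * emeasure M (space M) + ennreal (1/\<eta>) * (\<integral>\<^sup>+x. ennreal (h k x powr 4) \<partial>M)"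
      by (subst nn_integral_add) (auto simp: nn_integral_cmult)
    also have "\<dots> \<le> ennreal (\<eta>*m) + ennreal (1/\<eta>) * ennreal (\<eta>*r/3)"
      using X \<eta> m0 by (auto simp: mm ennreal_mult intro!: add_mono mult_left_mono)
    also have "\<dots> = ennreal (\<eta>*m + r/3)"
      using \<eta> m0 r by (simp add: ennreal_mult[symmetric] ennreal_plus)
    also have "\<dots> < ennreal r"
    proof -
      have "\<eta>*m = r * (m / (2*(m+1)))" by (simp add: \<eta>_def)
      also have "\<dots> \<le> r * (1/2)" using r m0 by (intro mult_left_mono) (auto simp: field_simps)
      finally have "\<eta>*m + r/3 < r" using r by simp
      then show ?thesis using r by (simp add: ennreal_lessI)
    qed
    finally show "(\<integral>\<^sup>+x. ennreal (h k x powr 2) \<partial>M) < ennreal r" .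
  qed
qed




lemma tdf_meas:
  assumes "test_div_free \<Omega> \<phi>" "\<Omega> \<in> sets lebesgue"
  shows "\<phi> \<in> borel_measurable (lebesgue_on \<Omega>)" "grad \<phi> \<in> borel_measurable (lebesgue_on \<Omega>)"
  using tdf_cont[OF assms(1)] grad_cont[OF assms(1)] assms(2)
  by (auto intro!: continuous_imp_measurable_on_sets_lebesgue intro: continuous_on_subset)

lemma sob_scale:
  assumes f: "f \<in> sob_closure q \<Omega>" and Om: "\<Omega> \<in> sets lebesgue"
  shows "(\<lambda>x. c *\<^sub>R f x) \<in> sob_closure q \<Omega>"
proof -
  obtain \<phi> G where \<phi>: "\<forall>k. test_div_free \<Omega> (\<phi> k)" and Gm: "G \<in> borel_measurable (lebesgue_on \<Omega>)"
    and l1: "(\<lambda>k. \<integral>\<^sup>+x. ennreal (norm (\<phi> k x - f x) powr q) \<partial>lebesgue_on \<Omega>) \<longlonglongrightarrow> 0"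
    and l2: "(\<lambda>k. \<integral>\<^sup>+x. ennreal (norm (grad (\<phi> k) x - G x) powr q) \<partial>lebesgue_on \<Omega>) \<longlonglongrightarrow> 0"
    and fm: "f \<in> borel_measurable (lebesgue_on \<Omega>)"
    using f unfolding sob_closure_def by blast
  have [measurable]: "\<phi> k \<in> borel_measurable (lebesgue_on \<Omega>)" "grad (\<phi> k) \<in> borel_measurable (lebesgue_on \<Omega>)" for k
    using tdf_meas \<phi> Om by blast+
  note [measurable] = Gm fm
  define C where "C = ennreal (\<bar>c\<bar> powr q)"
  have Ct: "C < top" by (simp add: C_def)
  have e1: "(\<integral>\<^sup>+x. ennreal (norm (c *\<^sub>R \<phi> k x - c *\<^sub>R f x) powr q) \<partial>lebesgue_on \<Omega>)
      = C * (\<integral>\<^sup>+x. ennreal (norm (\<phi> k x - f x) powr q) \<partial>lebesgue_on \<Omega>)" for k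
  proof -
    have "ennreal (norm (c *\<^sub>R \<phi> k x - c *\<^sub>R f x) powr q) = C * ennreal (norm (\<phi> k x - f x) powr q)" for x
    proof -
      have "norm (c *\<^sub>R \<phi> k x - c *\<^sub>R f x) powr q = \<bar>c\<bar> powr q * norm (\<phi> k x - f x) powr q"
        by (simp add: scaleR_diff_right[symmetric] powr_mult)
      then show ?thesis by (simp add: C_def ennreal_mult)
    qed
    then show ?thesis by (simp add: nn_integral_cmult)
  qed
  have e2: "(\<integral>\<^sup>+x. ennreal (norm (grad (\<lambda>x. c *\<^sub>R \<phi> k x) x - c *\<^sub>R G x) powr q) \<partial>lebesgue_on \<Omega>)
      = C * (\<integral>\<^sup>+x. ennreal (norm (grad (\<phi> k) x - G x) powr q) \<partial>lebesgue_on \<Omega>)" for k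
  proof -
    have "ennreal (norm (grad (\<lambda>x. c *\<^sub>R \<phi> k x) x - c *\<^sub>R G x) powr q) = C * ennreal (norm (grad (\<phi> k) x - G x) powr q)" for x
    proof -
      have "norm (grad (\<lambda>x. c *\<^sub>R \<phi> k x) x - c *\<^sub>R G x) powr q = \<bar>c\<bar> powr q * norm (grad (\<phi> k) x - G x) powr q"
        using grad_scale[OF \<phi>[rule_format, of k]] by (simp add: scaleR_diff_right[symmetric] powr_mult)
      then show ?thesis by (simp add: C_def ennreal_mult)
    qed
    then show ?thesis by (simp add: nn_integral_cmult)
  qed
  have t1: "(\<lambda>k. \<integral>\<^sup>+x. ennreal (norm (c *\<^sub>R \<phi> k x - c *\<^sub>R f x) powr q) \<partial>lebesgue_on \<Omega>) \<longlonglongrightarrow> 0"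
    unfolding e1 using ennreal_tendsto_cmult[OF Ct l1] by simp
  have t2: "(\<lambda>k. \<integral>\<^sup>+x. ennreal (norm (grad (\<lambda>x. c *\<^sub>R \<phi> k x) x - c *\<^sub>R G x) powr q) \<partial>lebesgue_on \<Omega>) \<longlonglongrightarrow> 0"
    unfolding e2 using ennreal_tendsto_cmult[OF Ct l2] by simp
  have "\<forall>k. test_div_free \<Omega> (\<lambda>x. c *\<^sub>R \<phi> k x)" using \<phi> tdf_scale by blast
  moreover have "(\<lambda>x. c *\<^sub>R G x) \<in> borel_measurable (lebesgue_on \<Omega>)" by measurable
  moreover have "(\<lambda>x. c *\<^sub>R f x) \<in> borel_measurable (lebesgue_on \<Omega>)" by measurable
  ultimately show ?thesis unfolding sob_closure_def mem_Collect_eq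
    apply (intro conjI)
     apply assumption
    apply (rule exI[of _ "\<lambda>k x. c *\<^sub>R \<phi> k x"])
    apply (rule exI[of _ "\<lambda>x. c *\<^sub>R G x"])
    using t1 t2 by blast
qed

lemma sob_4_2:
  assumes f: "f \<in> sob_closure 4 \<Omega>" and Om: "\<Omega> \<in> sets lebesgue" and fin: "emeasure lebesgue \<Omega> < \<infinity>"
  shows "f \<in> sob_closure 2 \<Omega>"
proof -
  obtain \<phi> G where \<phi>: "\<forall>k. test_div_free \<Omega> (\<phi> k)" and Gm: "G \<in> borel_measurable (lebesgue_on \<Omega>)"
    and l1: "(\<lambda>k. \<integral>\<^sup>+x. ennreal (norm (\<phi> k x - f x) powr 4) \<partial>lebesgue_on \<Omega>) \<longlonglongrightarrow> 0"
    and l2: "(\<lambda>k. \<integral>\<^sup>+x. ennreal (norm (grad (\<phi> k) x - G x) powr 4) \<partial>lebesgue_on \<Omega>) \<longlonglongrightarrow> 0"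
    and fm: "f \<in> borel_measurable (lebesgue_on \<Omega>)"
    using f unfolding sob_closure_def by blast
  have [measurable]: "\<phi> k \<in> borel_measurable (lebesgue_on \<Omega>)" "grad (\<phi> k) \<in> borel_measurable (lebesgue_on \<Omega>)" for k
    using tdf_meas \<phi> Om by blast+
  note [measurable] = Gm fm
  have fin': "emeasure (lebesgue_on \<Omega>) (space (lebesgue_on \<Omega>)) < \<infinity>"
    using fin Om by (simp add: emeasure_restrict_space)
  have t1: "(\<lambda>k. \<integral>\<^sup>+x. ennreal (norm (\<phi> k x - f x) powr 2) \<partial>lebesgue_on \<Omega>) \<longlonglongrightarrow> 0"
    by (rule L4_L2[OF _ fin' _ l1]) auto
  have t2: "(\<lambda>k. \<integral>\<^sup>+x. ennreal (norm (grad (\<phi> k) x - G x) powr 2) \<partial>lebesgue_on \<Omega>) \<longlonglongrightarrow> 0"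
    by (rule L4_L2[OF _ fin' _ l2]) auto
  show ?thesis unfolding sob_closure_def using \<phi> Gm fm t1 t2 by blast
qed




lemma min_enn:
  fixes M :: real assumes "M \<ge> 0"
  shows "p = top \<Longrightarrow> enn2real (min p (ennreal M)) = M"
    and "r \<ge> 0 \<Longrightarrow> p = ennreal r \<Longrightarrow> enn2real (min p (ennreal M)) = min r M"
  subgoal using assms by (simp add: min.absorb2)
  subgoal using assms by (auto simp: min_def ennreal_le_iff)
  done

theorem lemma2p3:
  fixes \<Omega> :: "(real^3) set" and T \<delta> :: real
    and p :: "(real^3) \<times> real \<Rightarrow> ennreal"
    and pn :: "nat \<Rightarrow> (real^3) \<times> real \<Rightarrow> real"
    and v :: "(real^3) \<times> real \<Rightarrow> real^3"
  assumes dom: "smooth_bounded_domain \<Omega>"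
    and T: "0 < T"
    and obs: "obstacle \<Omega> T p"
    and apx: "approx_seq \<Omega> T p pn"
    and vC: "C_W_sigma \<Omega> T v"
    and vcont: "continuous_on (\<Omega> \<times> {0..T}) v"
    and vle: "\<forall>z\<in>\<Omega> \<times> {0<..<T}. ennreal (norm (v z)) \<le> p z"
    and dpos: "\<delta> > 0"
    and vsupp: "supp (\<lambda>z. if z \<in> \<Omega> \<times> {0..T} then v z else 0)
                  \<subseteq> {z \<in> \<Omega> \<times> {0..T}. p z \<ge> ennreal \<delta>}"
  shows "let M = \<delta> + (SUP z\<in>\<Omega> \<times> {0<..<T}. norm (v z));
             S = supp (\<lambda>z. if z \<in> \<Omega> \<times> {0..T} then v z else 0);
             \<delta>n = (\<lambda>n. if S = {} then 0 else
                    (1 / \<delta>) * (SUP z\<in>S. \<bar>enn2real (min (p z) (ennreal M)) - min (pn n z) M\<bar>))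
         in \<delta>n \<longlonglongrightarrow> 0 \<and>
            (\<forall>n. \<forall>t\<in>{0..T}. (\<lambda>x. max (1 - \<delta>n n) 0 *\<^sub>R v (x, t)) \<in> K \<Omega> (pn n) t)"
proof -
  define Sv where "Sv = (SUP z\<in>\<Omega> \<times> {0<..<T}. norm (v z))"
  define M where "M = \<delta> + Sv"
  define S where "S = supp (\<lambda>z. if z \<in> \<Omega> \<times> {0..T} then v z else 0)"
  define D where "D = (\<lambda>n z. \<bar>enn2real (min (p z) (ennreal M)) - min (pn n z) M\<bar>)"
  define \<delta>n where "\<delta>n = (\<lambda>n. if S = {} then 0 else
                    (1 / \<delta>) * (SUP z\<in>S. \<bar>enn2real (min (p z) (ennreal M)) - min (pn n z) M\<bar>))"
  have \<delta>n_eq: "\<delta>n n = (if S = {} then 0 else (1/\<delta>) * (SUP z\<in>S. D n z))" for n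
    by (simp add: \<delta>n_def D_def)
  have Oopen: "open \<Omega>" and Obdd: "bounded \<Omega>" and One: "\<Omega> \<noteq> {}"
    using dom unfolding smooth_bounded_domain_def by auto
  have Om: "\<Omega> \<in> sets lebesgue" and fin: "emeasure lebesgue \<Omega> < \<infinity>"
    using lmeasurable_open[OF Obdd Oopen] by (auto simp: fmeasurable_def)
  have pcont: "continuous_on (closure \<Omega> \<times> {0..T}) p" using obs by (simp add: obstacle_def)
  have pnpos: "\<And>n z. z \<in> closure \<Omega> \<times> {0..T} \<Longrightarrow> pn n z > 0" using apx unfolding approx_seq_def by blast
  have SS': "S \<subseteq> {z \<in> \<Omega> \<times> {0..T}. p z \<ge> ennreal \<delta>}"
    using vsupp by (simp only: S_def)
  have SS: "S \<subseteq> \<Omega> \<times> {0..T}" and Sp: "\<And>z. z \<in> S \<Longrightarrow> p z \<ge> ennreal \<delta>"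
    using SS' by blast+
  have OmCl: "\<Omega> \<times> {0..T} \<subseteq> closure \<Omega> \<times> {0..T}"
    by (rule Sigma_mono[OF closure_subset]) (rule order_refl)
  have Scl: "S \<subseteq> closure \<Omega> \<times> {0..T}" using SS OmCl by (rule order_trans)
  have Scomp: "compact S"
  proof -
    have "bounded (\<Omega> \<times> {0..T})" using Obdd by (intro bounded_Times) auto
    then have "bounded S" using SS bounded_subset by blast
    moreover have "closed S" by (simp add: S_def supp_def)
    ultimately show ?thesis using compact_eq_bounded_closed by blast
  qed
  have vinS: "z \<in> \<Omega> \<times> {0..T} \<Longrightarrow> v z \<noteq> 0 \<Longrightarrow> z \<in> S" for z
  proof -
    assume "z \<in> \<Omega> \<times> {0..T}" "v z \<noteq> 0"
    then have "z \<in> {z. (if z \<in> \<Omega> \<times> {0..T} then v z else 0) \<noteq> 0}" by simp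
    then show "z \<in> S" unfolding S_def supp_def by (rule closure_subset[THEN subsetD])
  qed
  obtain B where B: "\<And>z. z \<in> \<Omega> \<times> {0..T} \<Longrightarrow> norm (v z) \<le> B"
  proof -
    have "compact (v ` S)" using Scomp SS vcont by (intro compact_continuous_image) (auto intro: continuous_on_subset)
    then obtain B0 where B0: "\<forall>y\<in>v ` S. norm y \<le> B0" using compact_imp_bounded bounded_iff by metis
    show ?thesis
    proof (rule that[of "max B0 0"])
      fix z assume "z \<in> \<Omega> \<times> {0..T}"
      show "norm (v z) \<le> max B0 0"
      proof (cases "v z = 0")
        case True then show ?thesis by simp
      next
        case False
        then have "z \<in> S" using vinS \<open>z \<in> \<Omega> \<times> {0..T}\<close> by blast
        then have "norm (v z) \<le> B0" using B0 by blast
        then show ?thesis by linarith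
      qed
    qed
  qed
  have bddv: "bdd_above ((\<lambda>z. norm (v z)) ` (\<Omega> \<times> {0<..<T}))"
    using B by (intro bdd_aboveI2[of _ _ B]) auto
  obtain x0 where x0: "x0 \<in> \<Omega>" using One by blast
  have z0: "(x0, T/2) \<in> \<Omega> \<times> {0<..<T}" using x0 T by auto
  have Sv0: "Sv \<ge> 0"
    using cSUP_upper[OF z0 bddv] norm_ge_zero[of "v (x0, T/2)"] unfolding Sv_def by linarith
  have M\<delta>: "M \<ge> \<delta>" and M0: "M > 0" using Sv0 dpos by (auto simp: M_def)
  have vbnd: "norm (v z) \<le> Sv \<and> ennreal (norm (v z)) \<le> p z" if z: "z \<in> \<Omega> \<times> {0..T}" for z
  proof -
    obtain x t where zxt: "z = (x, t)" and x: "x \<in> \<Omega>" and t: "0 \<le> t" "t \<le> T" using z by auto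
    define s where "s = (\<lambda>k::nat. t + (T/2 - t) * (1 / (real k + 2)))"
    have sin: "s k \<in> {0<..<T}" for k
    proof -
      define w where "w = 1 / (real k + 2)"
      have w: "0 < w" "w \<le> 1/2" by (auto simp: w_def field_simps)
      have e0: "s k = t + (T/2 - t) * w" unfolding s_def w_def by (rule refl)
      have e: "s k = t*(1-w) + (T/2)*w" unfolding e0 by (simp add: algebra_simps)
      have "0 \<le> t*(1-w)" using t w by simp
      moreover have "t*(1-w) \<le> T*(1-w)" using t w by (intro mult_right_mono) auto
      moreover have "0 < (T/2)*w" using T w by simp
      moreover have "T*(1-w) + (T/2)*w < T" using T w by (simp add: algebra_simps)
      ultimately show ?thesis unfolding e by simp
    qed
    have slim: "s \<longlonglongrightarrow> t"
    proof -
      have fl: "filterlim (\<lambda>k::nat. real k + 2) at_infinity sequentially"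
        apply (rule filterlim_at_top_imp_at_infinity)
        apply (subst add.commute)
        apply (rule filterlim_tendsto_add_at_top[OF tendsto_const filterlim_real_sequentially])
        done
      have "(\<lambda>k. (T/2 - t) / (real k + 2)) \<longlonglongrightarrow> 0"
        by (rule tendsto_divide_0[OF tendsto_const fl])
      from tendsto_add[OF tendsto_const[of t] this] show ?thesis by (simp add: s_def)
    qed
    have zlim: "(\<lambda>k. (x, s k)) \<longlonglongrightarrow> z" using slim by (simp add: zxt tendsto_Pair)
    have zin: "(x, s k) \<in> \<Omega> \<times> {0..T}" for k using sin[of k] x by auto
    have vlim: "(\<lambda>k. v (x, s k)) \<longlonglongrightarrow> v z"
      using vcont[unfolded continuous_on_sequentially] zin zlim z by (auto simp: o_def)
    have zin': "(x, s k) \<in> closure \<Omega> \<times> {0..T}" for k using zin OmCl by blast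
    have z': "z \<in> closure \<Omega> \<times> {0..T}" using z OmCl by blast
    have plim: "(\<lambda>k. p (x, s k)) \<longlonglongrightarrow> p z"
      using pcont[unfolded continuous_on_sequentially] zin' zlim z' by (auto simp: o_def)
    have nlim: "(\<lambda>k. norm (v (x, s k))) \<longlonglongrightarrow> norm (v z)" using vlim by (rule tendsto_norm)
    have "norm (v z) \<le> Sv"
    proof (rule LIMSEQ_le[OF nlim tendsto_const])
      show "\<exists>N. \<forall>n\<ge>N. norm (v (x, s n)) \<le> Sv"
        using cSUP_upper[OF _ bddv] sin x unfolding Sv_def by auto
    qed
    moreover have "ennreal (norm (v z)) \<le> p z"
    proof (rule LIMSEQ_le[OF _ plim])
      show "(\<lambda>k. ennreal (norm (v (x, s k)))) \<longlonglongrightarrow> ennreal (norm (v z))"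
        using nlim by (rule tendsto_ennrealI)
      show "\<exists>N. \<forall>n\<ge>N. ennreal (norm (v (x, s n))) \<le> p (x, s n)"
        using vle sin x by auto
    qed
    ultimately show ?thesis by blast
  qed
  have mprops: "\<delta> \<le> enn2real (min (p z) (ennreal M)) \<and> enn2real (min (p z) (ennreal M)) \<le> M
      \<and> norm (v z) \<le> enn2real (min (p z) (ennreal M))" if z: "z \<in> S" for z
  proof -
  have zz: "z \<in> \<Omega> \<times> {0..T}" using SS z by blast
  have nvS: "norm (v z) \<le> Sv" and nvp: "ennreal (norm (v z)) \<le> p z" using vbnd[OF zz] by blast+
  show ?thesis
  proof (cases "p z")
    case top
    have eq: "enn2real (min (p z) (ennreal M)) = M" using min_enn(1)[OF less_imp_le[OF M0] top] .
    have "norm (v z) \<le> M" using nvS dpos M_def by linarith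
    then show ?thesis using eq M\<delta> by simp
  next
    case (real r)
    have "ennreal \<delta> \<le> ennreal r" using Sp[OF z] real by simp
    then have "\<delta> \<le> r" using dpos real by (simp add: ennreal_le_iff)
    moreover have "norm (v z) \<le> r" using nvp real by (simp add: ennreal_le_iff)
    moreover have "norm (v z) \<le> M" using nvS dpos by (simp add: M_def)
    ultimately show ?thesis using min_enn(2)[OF less_imp_le[OF M0] real] real M\<delta> by auto
  qed
  qed
  have Dbnd: "0 \<le> D n z \<and> D n z \<le> M" if z: "z \<in> S" for n z
  proof -
    have "0 < pn n z" using pnpos Scl z by blast
    then have b: "0 < min (pn n z) M" "min (pn n z) M \<le> M" using M0 by auto
    have c: "\<delta> \<le> enn2real (min (p z) (ennreal M))" "enn2real (min (p z) (ennreal M)) \<le> M"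
      using mprops[OF z] by blast+
    have "enn2real (min (p z) (ennreal M)) - min (pn n z) M \<le> M"
         "- (enn2real (min (p z) (ennreal M)) - min (pn n z) M) \<le> M" using b c dpos by linarith+
    then show ?thesis unfolding D_def by (intro conjI abs_ge_zero abs_leI)
  qed
  have bddD: "bdd_above (D n ` S)" for n using Dbnd by (intro bdd_aboveI2[of _ _ M]) auto
  have \<delta>n0: "\<delta>n n \<ge> 0" for n
  proof (cases "S = {}")
    case False
    then obtain z where "z \<in> S" by blast
    then have "0 \<le> (SUP z\<in>S. D n z)" using cSUP_upper[OF _ bddD] Dbnd by (meson order_trans)
    then show ?thesis using False dpos by (simp add: \<delta>n_eq)
  qed (simp add: \<delta>n_eq)
  have Dle: "D n z \<le> \<delta> * \<delta>n n" if z: "z \<in> S" for n z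
  proof -
    have "S \<noteq> {}" using z by blast
    then have "\<delta> * \<delta>n n = (SUP z\<in>S. D n z)" using dpos by (simp add: \<delta>n_eq)
    then show ?thesis using cSUP_upper[OF z bddD] by simp
  qed
  have part1: "\<delta>n \<longlonglongrightarrow> 0"
  proof (cases "S = {}")
    case True
    have "\<delta>n = (\<lambda>n. 0)" by (rule ext) (simp add: \<delta>n_eq True)
    then show ?thesis by simp
  next
    case Sne: False
    obtain M00 where M00: "M00 > 0" and bM: "\<And>M'. M' \<ge> M00 \<Longrightarrow> \<exists>nM. \<forall>n\<ge>nM. \<forall>z\<in>closure \<Omega> \<times> {0..T}.
         p z > ennreal M' \<longrightarrow> M' \<le> pn n z \<and> ennreal (pn n z) \<le> p z"
      using apx unfolding approx_seq_def by blast
    have aM: "\<And>\<kappa> \<epsilon>. \<kappa> > 0 \<Longrightarrow> \<epsilon> > 0 \<Longrightarrow> \<exists>N. \<forall>n\<ge>N. \<forall>z\<in>closure \<Omega> \<times> {0..T}.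
         p z \<le> ennreal \<kappa> \<longrightarrow> \<bar>pn n z - enn2real (p z)\<bar> < \<epsilon>"
      using apx unfolding approx_seq_def by blast
    define M1 where "M1 = max M M00"
    have M1: "M1 \<ge> M00" "M1 \<ge> M" "M1 > 0" using M00 by (auto simp: M1_def)
    obtain nM where nM: "\<forall>n\<ge>nM. \<forall>z\<in>closure \<Omega> \<times> {0..T}.
         p z > ennreal M1 \<longrightarrow> M1 \<le> pn n z \<and> ennreal (pn n z) \<le> p z"
      using bM[OF M1(1)] by blast
    show ?thesis
    proof (rule LIMSEQ_I)
      fix r :: real assume r: "0 < r"
      obtain N where N: "\<forall>n\<ge>N. \<forall>z\<in>closure \<Omega> \<times> {0..T}.
         p z \<le> ennreal M1 \<longrightarrow> \<bar>pn n z - enn2real (p z)\<bar> < r * \<delta> / 2"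
        using aM[OF M1(3), of "r*\<delta>/2"] r dpos by auto
      show "\<exists>no. \<forall>n\<ge>no. norm (\<delta>n n - 0) < r"
      proof (intro exI allI impI)
        fix n assume n: "max N nM \<le> n"
        have Dz: "D n z \<le> r * \<delta> / 2" if z: "z \<in> S" for z
        proof -
          have z': "z \<in> closure \<Omega> \<times> {0..T}" using Scl z by blast
          show ?thesis
          proof (cases "p z \<le> ennreal M1")
            case True
            then obtain q where q: "q \<ge> 0" "p z = ennreal q"
              by (cases "p z") (auto simp: top_unique)
            have nN: "N \<le> n" using n by simp
            have "\<bar>pn n z - enn2real (p z)\<bar> < r * \<delta> / 2" using N nN z' True by blast
            then have "\<bar>pn n z - q\<bar> < r * \<delta> / 2" using q by simp
            moreover have "D n z = \<bar>min q M - min (pn n z) M\<bar>"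
              using min_enn(2)[OF less_imp_le[OF M0] q] by (simp add: D_def)
            ultimately show ?thesis by linarith
          next
            case False
            then have pg: "p z > ennreal M1" by simp
            then have "M1 \<le> pn n z" using nM n z' by auto
            then have "min (pn n z) M = M" using M1 by simp
            moreover have "enn2real (min (p z) (ennreal M)) = M"
            proof (cases "p z")
              case top then show ?thesis using min_enn(1)[OF less_imp_le[OF M0]] by simp
            next
              case (real q)
              then have "q > M1" using pg real M1(3) by (simp add: ennreal_less_iff)
              then show ?thesis using min_enn(2)[OF less_imp_le[OF M0] real] M1 by simp
            qed
            ultimately have "D n z = 0" by (simp add: D_def)
            then show ?thesis using r dpos by simp
          qed
        qed
        have "(SUP z\<in>S. D n z) \<le> r * \<delta> / 2" using Sne Dz by (intro cSUP_least) auto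
        then have "\<delta> * \<delta>n n \<le> \<delta> * (r / 2)" using Sne dpos by (simp add: \<delta>n_eq mult.commute)
        then have "\<delta>n n \<le> r / 2" using dpos by simp
        then show "norm (\<delta>n n - 0) < r" using \<delta>n0[of n] r by simp
      qed
    qed
  qed
  have part2: "(\<lambda>x. max (1 - \<delta>n n) 0 *\<^sub>R v (x, t)) \<in> K \<Omega> (pn n) t" if t: "t \<in> {0..T}" for n t
  proof -
    define c where "c = max (1 - \<delta>n n) 0"
    have c0: "c \<ge> 0" by (simp add: c_def)
    have W: "(\<lambda>x. v (x, t)) \<in> sob_closure 4 \<Omega>" using vC t by (simp add: C_W_sigma_def W_sigma_def)
    have V: "(\<lambda>x. c *\<^sub>R v (x, t)) \<in> V_sigma \<Omega>"
      unfolding V_sigma_def by (rule sob_4_2[OF sob_scale[OF W Om] Om fin])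
    have pt: "norm (c *\<^sub>R v (x, t)) \<le> pn n (x, t)" if x: "x \<in> \<Omega>" for x
    proof -
      have z: "(x, t) \<in> \<Omega> \<times> {0..T}" using x t by auto
      have z': "(x, t) \<in> closure \<Omega> \<times> {0..T}" using z OmCl by blast
      have pnp: "pn n (x, t) > 0" using pnpos[OF z'] .
      show ?thesis
      proof (cases "v (x, t) = 0 \<or> c = 0")
        case True then show ?thesis using pnp by auto
      next
        case False
        then have zS: "(x, t) \<in> S" using vinS z by blast
        have c: "c = 1 - \<delta>n n" "\<delta>n n \<le> 1" using False by (auto simp: c_def max_def split: if_splits)
        define mm where "mm = enn2real (min (p (x, t)) (ennreal M))"
        have mp: "\<delta> \<le> mm" "norm (v (x, t)) \<le> mm" using mprops[OF zS] by (auto simp: mm_def)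
        have "mm - min (pn n (x, t)) M \<le> \<delta> * \<delta>n n" using Dle[OF zS, of n] unfolding D_def mm_def by (simp add: abs_le_iff)
        moreover have "c * norm (v (x, t)) \<le> c * mm" using mp c0 by (intro mult_left_mono) auto
        moreover have "\<delta>n n * \<delta> \<le> \<delta>n n * mm" using mp \<delta>n0[of n] by (intro mult_left_mono) auto
        moreover have "min (pn n (x, t)) M \<le> pn n (x, t)" by simp
        moreover have "c * mm = mm - \<delta>n n * mm" unfolding c(1) by (simp add: algebra_simps)
        moreover have "\<delta>n n * \<delta> = \<delta> * \<delta>n n" by simp
        ultimately have "c * norm (v (x, t)) \<le> pn n (x, t)" by linarith
        then show ?thesis using c0 by simp
      qed
    qed
    have "AE x in lebesgue_on \<Omega>. norm (c *\<^sub>R v (x, t)) \<le> pn n (x, t)"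
      by (rule AE_I2) (use pt in auto)
    then show ?thesis using V unfolding K_def c_def by simp
  qed
  have "\<delta>n \<longlonglongrightarrow> 0 \<and> (\<forall>n. \<forall>t\<in>{0..T}. (\<lambda>x. max (1 - \<delta>n n) 0 *\<^sub>R v (x, t)) \<in> K \<Omega> (pn n) t)"
    using part1 part2 by blast
  then show ?thesis by (simp only: Let_def Sv_def M_def S_def \<delta>n_def) blast
qed


end
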